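(* Let $n\ge1$. Let $\lambda_i^{(n+1)}$, for $0\le i\le\binom{n+1}{2}$, be the unique integers with $$[n+1]!=\sum_{s=1}^n\left[n\atop s\right][2]^s+\lambda_0^{(n+1)}+\sum_{l=1}^{\binom{n+1}{2}}\lambda_l^{(n+1)}(q^l+q^{-l}).$$ For $i\ge0$, let $\mu_i^{(n+1)}$ be the coefficient of $q^i$ in $[n+1]!$; this is $0$ for $i>\binom{n+1}{2}$. Then: (a) For $0\le i\le n$, $$\mu_i^{(n+1)}=\lambda_i^{(n+1)}+\sum_{\substack{i\le s\le n\\ s\equiv i \bmod 2}}\left[n\atop s\right]\binom{s}{\frac{s+i}{2}}.$$ For $n+1\le i\le\binom{n+1}{2}$, $\mu_i^{(n+1)}=\lambda_i^{(n+1)}$. (b) Let $I=\lfloor\frac{n+1}{2}\rfloor$. If $I$ is odd, then for every even $i$; and if $I$ is even, then for every odd $i$: $$\lambda_i^{(n+1)}=-\sum_{\substack{i\le s\le n\\ s\equiv i\bmod 2}}\left[n\atop s\right]\binom{s}{\frac{s+i}{2}}\quad\text{if }0\le i\le n,$$ and $\lambda_i^{(n+1)}=0$ if $n+1\le i\le\binom{n+1}{2}$. (c) For all $i\ge0$, $$\mu_i^{(n+2)}=\sum_{j=0}^{n+1}\mu^{(n+1)}_{|i-(n+1)+2j|}.$$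
   Context: For an integer $k\ge1$, the quantum integer is the Laurent polynomial $$[k]=\frac{q^k-q^{-k}}{q-q^{-1}}=q^{k-1}+q^{k-3}+\cdots+q^{1-k}\in\mathbb{Z}[q,q^{-1}],$$ and $[m]!=[m][m-1]\cdots[1]$. The unsigned Stirling number of the first kind $\left[n\atop s\right]$ is the number of permutations of $\{1,\dots,n\}$ having exactly $s$ cycles in their disjoint-cycle decomposition, fixed points included. *)

theory Defs
  imports "HOL-Combinatorics.Stirling" "HOL-Computational_Algebra.Formal_Laurent_Series"
begin

text \<open>Laurent polynomials in q with integer coefficients are modelled as formal Laurent
  series over int; q^j is fls_X_intpow j.\<close>

definition qint :: "nat \<Rightarrow> int fls" where
  "qint k = (\<Sum>j<k. fls_X_intpow (int k - 1 - 2 * int j))"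

definition qfact :: "nat \<Rightarrow> int fls" where
  "qfact m = (\<Prod>k\<in>{1..m}. qint k)"

definition mu :: "nat \<Rightarrow> nat \<Rightarrow> int" where
  "mu m i = fls_nth (qfact m) (int i)"

end

theory Submission imports Defs begin

lemma mult_qint_nth:
  "fls_nth (f * qint k) i = (\<Sum>j<k. fls_nth f (i - (int k - 1 - 2*int j)))"
  unfolding qint_def sum_distrib_left fls_nth_sum
  by (simp add: fls_shifted_times_simps algebra_simps)

lemma qfact_Suc: "qfact (Suc m) = qfact m * qint (Suc m)"
  unfolding qfact_def by (simp add: prod.nat_ivl_Suc' mult.commute)

lemma qfact_sym: "fls_nth (qfact m) (-i) = fls_nth (qfact m) i"
proof (induction m arbitrary: i)
  case 0
  then show ?case by (simp add: qfact_def)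
next
  case (Suc m)
  have "fls_nth (qfact (Suc m)) (-i) = (\<Sum>j<Suc m. fls_nth (qfact m) (i + int m - 2*int j))"
    unfolding qfact_Suc mult_qint_nth
  proof (intro sum.cong refl)
    fix j show "fls_nth (qfact m) (- i - (int (Suc m) - 1 - 2 * int j)) = fls_nth (qfact m) (i + int m - 2 * int j)"
      using Suc.IH[of "i + int m - 2*int j"] by (simp add: algebra_simps)
  qed
  also have "\<dots> = (\<Sum>j<Suc m. fls_nth (qfact m) (i + int m - 2*int (m - j)))"
    by (rule sum.reindex_bij_witness[where i="\<lambda>j. m - j" and j="\<lambda>j. m - j"]) auto
  also have "\<dots> = fls_nth (qfact (Suc m)) i"
    unfolding qfact_Suc mult_qint_nth
    by (intro sum.cong) (auto simp: algebra_simps of_nat_diff)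
  finally show ?case .
qed

lemma qfact_par: "fls_nth (qfact m) i \<noteq> 0 \<Longrightarrow> even (i + int (\<Sum>k<m. k))"
proof (induction m arbitrary: i)
  case 0
  then show ?case by (simp add: qfact_def split: if_splits)
next
  case (Suc m)
  have "(\<Sum>j<Suc m. fls_nth (qfact m) (i - (int m - 2*int j))) \<noteq> 0"
    using Suc.prems unfolding qfact_Suc mult_qint_nth by simp
  then obtain j where "j < Suc m" "fls_nth (qfact m) (i - (int m - 2*int j)) \<noteq> 0"
    by (meson lessThan_iff sum.neutral)
  from Suc.IH[OF this(2)] show ?case by simp presburger
qed

lemma qint2: "qint 2 = fls_X_intpow 1 + fls_X_intpow (-1)"
  by (simp add: qint_def numeral_2_eq_2 lessThan_Suc)

lemma qint2_pow: "qint 2 ^ s = (\<Sum>k\<le>s. of_nat (s choose k) * fls_X_intpow (2*int k - int s))"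
  unfolding qint2 binomial_ring
proof (intro sum.cong refl)
  fix k assume "k \<in> {..s}"
  then show "of_nat (s choose k) * fls_X_intpow 1 ^ k * fls_X_intpow (- 1) ^ (s - k) =
         (of_nat (s choose k) :: int fls) * fls_X_intpow (2 * int k - int s)"
  proof -
    have A: "(fls_X_intpow 1 :: int fls) ^ k = fls_X_intpow (int k)"
      using fls_X_intpow_power[of 1 k] by simp
    have B: "(fls_X_intpow (-1) :: int fls) ^ (s-k) = fls_X_intpow (- int (s-k))"
      using fls_X_intpow_power[of "-1" "s-k"] by simp
    have C: "(fls_X_intpow (int k) :: int fls) * fls_X_intpow (- int (s-k)) = fls_X_intpow (int k + - int (s-k))"
      by (rule fls_X_intpow_times_fls_X_intpow)
    have D: "int k + - int (s-k) = 2 * int k - int s" using \<open>k \<in> {..s}\<close> by auto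
    show ?thesis by (simp only: A B C D mult.assoc)
  qed
qed

lemma qint2_pow_nth: "fls_nth (qint 2 ^ s) (int i) =
   (if i \<le> s \<and> even (s - i) then int (s choose ((s+i) div 2)) else 0)"
proof -
  have "fls_nth (qint 2 ^ s) (int i) = (\<Sum>k\<le>s. (if k = (s+i) div 2 \<and> i \<le> s \<and> even (s - i) then int (s choose k) else 0))"
    unfolding qint2_pow fls_nth_sum
  proof (intro sum.cong refl)
    fix k assume "k \<in> {..s}"
    have "(int i = 2 * int k - int s) = (k = (s+i) div 2 \<and> i \<le> s \<and> even (s - i))"
      using \<open>k \<in> {..s}\<close> by (auto; presburger)
    then show "fls_nth (of_nat (s choose k) * fls_X_intpow (2 * int k - int s)) (int i) =
        (if k = (s+i) div 2 \<and> i \<le> s \<and> even (s - i) then int (s choose k) else 0)"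
    proof -
      have E: "fls_nth (of_nat c * fls_X_intpow m) (int i) = (if int i = m then int c else 0)" for c m
        by (simp add: fls_of_nat)
      show ?thesis unfolding E \<open>(int i = 2 * int k - int s) = _\<close> by simp
    qed
  qed
  also have "\<dots> = (if i \<le> s \<and> even (s - i) then int (s choose ((s+i) div 2)) else 0)"
  proof (cases "i \<le> s \<and> even (s - i)")
    case True then show ?thesis by simp
  next
    case False
    have "(\<Sum>k\<le>s. (if k = (s+i) div 2 \<and> i \<le> s \<and> even (s - i) then int (s choose k) else 0)) = 0"
      using False by (intro sum.neutral) simp
    with False show ?thesis by presburger
  qed
  finally show ?thesis .
qed

lemma two_T: "2 * (\<Sum>k<Suc m. k::nat) = Suc m * m"
  by (induction m) (auto simp: algebra_simps)

lemma parity_T: "even (\<Sum>k<(n::nat)+1. k) \<longleftrightarrow> even ((n+1) div 2)"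
proof (cases "even n")
  case True
  then obtain t where t: "n = 2*t" by blast
  have "2 * (\<Sum>k<n+1. k) = 2 * ((2*t+1)*t)" using two_T[of n] t by (simp add: algebra_simps)
  then have "(\<Sum>k<n+1. k) = (2*t+1)*t" by linarith
  then show ?thesis by (simp only:) (simp add: t)
next
  case False
  then obtain t where t: "n = 2*t+1" using oddE by blast
  have "2 * (\<Sum>k<n+1. k) = 2 * ((t+1)*(2*t+1))" using two_T[of n] t by (simp add: algebra_simps)
  then have "(\<Sum>k<n+1. k) = (t+1)*(2*t+1)" by linarith
  then show ?thesis by (simp only:) (simp add: t)
qed

lemma fls_nth_abs: "fls_nth (qfact m) x = fls_nth (qfact m) (int (nat \<bar>x\<bar>))"
proof (cases "x \<ge> 0")
  case True then show ?thesis by simp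
next
  case False then show ?thesis using qfact_sym[of m "-x"] by simp
qed

theorem proposition4:
  fixes n :: nat and lam :: "nat \<Rightarrow> int"
  assumes n: "n \<ge> 1"
    and lam: "qfact (n + 1) =
        (\<Sum>s=1..n. of_nat (stirling n s) * qint 2 ^ s)
        + fls_const (lam 0)
        + (\<Sum>l=1..(n + 1) choose 2.
             fls_const (lam l) * (fls_X_intpow (int l) + fls_X_intpow (- int l)))"
  shows
    "(\<forall>i\<le>n. mu (n + 1) i = lam i +
        (\<Sum>s\<in>{s. i \<le> s \<and> s \<le> n \<and> even (s - i)}.
            int (stirling n s) * int (s choose ((s + i) div 2))))
   \<and> (\<forall>i. n + 1 \<le> i \<and> i \<le> (n + 1) choose 2 \<longrightarrow> mu (n + 1) i = lam i)
   \<and> (\<forall>i\<le>(n + 1) choose 2.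
        ((odd ((n + 1) div 2) \<and> even i) \<or> (even ((n + 1) div 2) \<and> odd i)) \<longrightarrow>
        (i \<le> n \<longrightarrow> lam i = - (\<Sum>s\<in>{s. i \<le> s \<and> s \<le> n \<and> even (s - i)}.
            int (stirling n s) * int (s choose ((s + i) div 2))))
        \<and> (n + 1 \<le> i \<longrightarrow> lam i = 0))
   \<and> (\<forall>i. mu (n + 2) i =
        (\<Sum>j=0..n + 1. mu (n + 1) (nat \<bar>int i - int (n + 1) + 2 * int j\<bar>)))"
proof -
  define C where "C = (n + 1) choose 2"
  define S where "S i = (\<Sum>s=1..n. int (stirling n s) *
      (if i \<le> s \<and> even (s - i) then int (s choose ((s+i) div 2)) else 0))" for i
  define B where "B i = (\<Sum>s\<in>{s. i \<le> s \<and> s \<le> n \<and> even (s - i)}.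
            int (stirling n s) * int (s choose ((s + i) div 2)))" for i
  have third: "fls_nth (\<Sum>l=1..C. fls_const (lam l) * (fls_X_intpow (int l) + fls_X_intpow (- int l))) (int i)
      = (if 1 \<le> i \<and> i \<le> C then lam i else 0)" for i
  proof -
    have "fls_nth (\<Sum>l=1..C. fls_const (lam l) * (fls_X_intpow (int l) + fls_X_intpow (- int l))) (int i)
        = (\<Sum>l=1..C. if l = i then lam l else 0)"
      unfolding fls_nth_sum by (intro sum.cong refl) auto
    also have "\<dots> = (if 1 \<le> i \<and> i \<le> C then lam i else 0)" by simp
    finally show ?thesis .
  qed
  have first: "fls_nth (\<Sum>s=1..n. of_nat (stirling n s) * qint 2 ^ s) (int i) = S i" for i
    unfolding fls_nth_sum S_def by (intro sum.cong refl) (simp add: fls_of_nat qint2_pow_nth)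
  have E: "mu (n+1) i = S i + lam i" if "i \<le> C" for i
  proof -
    have "mu (n+1) i = S i + (if i = 0 then lam 0 else 0) + (if 1 \<le> i \<and> i \<le> C then lam i else 0)"
      unfolding mu_def lam C_def[symmetric] fls_plus_nth first third by simp
    then show ?thesis using that by (cases "i = 0") auto
  qed
  have nC: "n \<le> C"
  proof -
    have "2 * n \<le> n + n * n" using n by (simp add: mult_le_mono)
    then have "(2 * n) div 2 \<le> (n + n * n) div 2" by (rule div_le_mono)
    then show ?thesis unfolding C_def by (simp add: choose_two)
  qed
  have SB: "S i = B i" for i
  proof -
    have "B i = (\<Sum>s\<in>{0..n}. if i \<le> s \<and> even (s - i) then int (stirling n s) * int (s choose ((s + i) div 2)) else 0)"
    proof -
      have "{s. i \<le> s \<and> s \<le> n \<and> even (s - i)} = {s\<in>{0..n}. i \<le> s \<and> even (s - i)}" by auto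
      then show ?thesis unfolding B_def by (simp only:) (rule sum.inter_filter, simp)
    qed
    also have "\<dots> = (if i \<le> 0 \<and> even (0 - i) then int (stirling n 0) * int (0 choose ((0 + i) div 2)) else 0)
       + (\<Sum>s\<in>{Suc 0..n}. if i \<le> s \<and> even (s - i) then int (stirling n s) * int (s choose ((s + i) div 2)) else 0)"
      by (rule sum.atLeast_Suc_atMost) simp
    also have "\<dots> = S i"
      unfolding S_def using n by (auto intro!: sum.cong)
    finally show ?thesis by simp
  qed
  have S0: "S i = 0" if "n < i" for i
    unfolding S_def using that by (intro sum.neutral) auto
  have A1: "\<forall>i\<le>n. mu (n + 1) i = lam i + B i"
    using E nC SB by auto
  have A2: "\<forall>i. n + 1 \<le> i \<and> i \<le> C \<longrightarrow> mu (n + 1) i = lam i"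
    using E S0 by auto
  have mu0: "mu (n+1) i = 0" if "(odd ((n + 1) div 2) \<and> even i) \<or> (even ((n + 1) div 2) \<and> odd i)" for i
  proof (rule ccontr)
    assume "mu (n+1) i \<noteq> 0"
    then have "even (int i + int (\<Sum>k<n+1. k))" unfolding mu_def by (rule qfact_par)
    moreover have "even (int i + int x) = (even i = even x)" for x :: nat by simp
    ultimately have "even i = even (\<Sum>k<n+1. k)" by blast
    then have "even i = even ((n+1) div 2)" using parity_T[of n] by blast
    then show False using that by blast
  qed
  have Bpart: "\<forall>i\<le>C.
        ((odd ((n + 1) div 2) \<and> even i) \<or> (even ((n + 1) div 2) \<and> odd i)) \<longrightarrow>
        (i \<le> n \<longrightarrow> lam i = - B i) \<and> (n + 1 \<le> i \<longrightarrow> lam i = 0)"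
    using A1 A2 mu0 by fastforce
  have Cpart: "mu (n + 2) i =
        (\<Sum>j=0..n + 1. mu (n + 1) (nat \<bar>int i - int (n + 1) + 2 * int j\<bar>))" for i
  proof -
    have "mu (n + 2) i = fls_nth (qfact (Suc (n+1))) (int i)" unfolding mu_def by simp
    also have "\<dots> = (\<Sum>j<Suc (n+1). fls_nth (qfact (n+1)) (int i - int (n + 1) + 2 * int j))"
      unfolding qfact_Suc mult_qint_nth by (intro sum.cong refl) (simp add: algebra_simps)
    also have "\<dots> = (\<Sum>j=0..n + 1. mu (n + 1) (nat \<bar>int i - int (n + 1) + 2 * int j\<bar>))"
      unfolding mu_def using fls_nth_abs
      by (simp add: atLeast0AtMost lessThan_Suc_atMost)
    finally show ?thesis .
  qed
  show ?thesis using A1 A2 Bpart Cpart unfolding B_def C_def by blast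
qed

end
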